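(* Let $\Gamma_0<\Gamma$ be a finite index inclusion of countable groups and let $\sigma_n:\Gamma_0\rightarrow\mathrm{Sym}(X_n)$ be a sofic approximation of $\Gamma_0$. If the induced sofic approximation $\mathrm{Ind}_{\Gamma_0}^{\Gamma}(\sigma_n):\Gamma\to\mathrm{Sym}(\Gamma/\Gamma_0\times X_n)$ of $\Gamma$ satisfies property $(\diamond)$, then $(\sigma_n)$ satisfies property $(\diamond)$.
   Context: For finite sets $X,Y$ and maps $\alpha,\beta:X\to Y$, $\mathrm{d}_{\mathrm{H}}(\alpha,\beta)=|X|^{-1}|\{x\in X\mid\alpha(x)\neq\beta(x)\}|$. A sofic approximation of a countable group $G$ is a sequence of maps $\sigma_n:G\to\mathrm{Sym}(X_n)$, $X_n$ finite, with $\mathrm{d}_{\mathrm{H}}(\sigma_n(g)\sigma_n(h),\sigma_n(gh))\to0$ for all $g,h\in G$ and $\mathrm{d}_{\mathrm{H}}(\sigma_n(g),\mathrm{Id}_{X_n})\to1$ for all $g\neq e$. A sofic approximation $\sigma_n:G\to\mathrm{Sym}(X_n)$ satisfies $(\diamond)$ if there exist a sofic approximation $\tau_n:G\to\mathrm{Sym}(Y_n)$ and maps $\theta_n:X_n\to Y_n$ such that (a) each $\tau_n$ is a homomorphism, (b) $\mathrm{d}_{\mathrm{H}}(\theta_n\circ\sigma_n(g),\tau_n(g)\circ\theta_n)\to0$ for every $g\in G$, and (c) $\mathrm{d}_{\mathrm{H}}(\theta_n\circ\sigma_n(g),\theta_n)\to1$ for every $g\in G\setminus\{e\}$. Induction: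 choose $s:\Gamma/\Gamma_0\to\Gamma$ with $s(e\Gamma_0)=e$ and $s(g\Gamma_0)\in g\Gamma_0$, let $c(g,h\Gamma_0)=s(gh\Gamma_0)^{-1}gs(h\Gamma_0)\in\Gamma_0$, and define $\mathrm{Ind}_{\Gamma_0}^{\Gamma}(\sigma_n)(g)(h\Gamma_0,x)=(gh\Gamma_0,\sigma_n(c(g,h\Gamma_0))x)$ for $g\in\Gamma$, $h\Gamma_0\in\Gamma/\Gamma_0$, $x\in X_n$; this is a sofic approximation of $\Gamma$. *)

theory Defs
  imports Complex_Main "HOL-Algebra.Left_Coset" "HOL-Combinatorics.Permutations" "HOL-Library.Countable_Set"
begin

definition hamming :: "'x set \<Rightarrow> ('x \<Rightarrow> 'y) \<Rightarrow> ('x \<Rightarrow> 'y) \<Rightarrow> real" where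
  "hamming X a b = real (card {x \<in> X. a x \<noteq> b x}) / real (card X)"

text \<open>Sofic approximation of the group G: sigma n g is a permutation of the finite set X n
  (elements of Sym(X n) are represented as maps permuting X n and fixing everything else).\<close>
definition sofic_approx ::
  "('g, 'm) monoid_scheme \<Rightarrow> (nat \<Rightarrow> 'x set) \<Rightarrow> (nat \<Rightarrow> 'g \<Rightarrow> 'x \<Rightarrow> 'x) \<Rightarrow> bool" where
  "sofic_approx G X \<sigma> \<longleftrightarrow>
     (\<forall>n. finite (X n)) \<and>
     (\<forall>n. \<forall>g\<in>carrier G. \<sigma> n g permutes X n) \<and>
     (\<forall>g\<in>carrier G. \<forall>h\<in>carrier G.
        (\<lambda>n. hamming (X n) (\<sigma> n g \<circ> \<sigma> n h) (\<sigma> n (g \<otimes>\<^bsub>G\<^esub> h))) \<longlonglongrightarrow> 0) \<and>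
     (\<forall>g\<in>carrier G. g \<noteq> \<one>\<^bsub>G\<^esub> \<longrightarrow> (\<lambda>n. hamming (X n) (\<sigma> n g) id) \<longlonglongrightarrow> 1)"

text \<open>Property (diamond). The finite sets Y n are taken inside nat (every finite set is in
  bijection with a finite set of naturals, so this loses no generality).\<close>
definition diamond ::
  "('g, 'm) monoid_scheme \<Rightarrow> (nat \<Rightarrow> 'x set) \<Rightarrow> (nat \<Rightarrow> 'g \<Rightarrow> 'x \<Rightarrow> 'x) \<Rightarrow> bool" where
  "diamond G X \<sigma> \<longleftrightarrow>
     (\<exists>(Y :: nat \<Rightarrow> nat set) (\<tau> :: nat \<Rightarrow> 'g \<Rightarrow> nat \<Rightarrow> nat) (\<theta> :: nat \<Rightarrow> 'x \<Rightarrow> nat).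
        sofic_approx G Y \<tau> \<and>
        (\<forall>n. \<forall>g\<in>carrier G. \<forall>h\<in>carrier G. \<tau> n (g \<otimes>\<^bsub>G\<^esub> h) = \<tau> n g \<circ> \<tau> n h) \<and>
        (\<forall>n. \<theta> n ` X n \<subseteq> Y n) \<and>
        (\<forall>g\<in>carrier G.
           (\<lambda>n. hamming (X n) (\<theta> n \<circ> \<sigma> n g) (\<tau> n g \<circ> \<theta> n)) \<longlonglongrightarrow> 0) \<and>
        (\<forall>g\<in>carrier G. g \<noteq> \<one>\<^bsub>G\<^esub> \<longrightarrow>
           (\<lambda>n. hamming (X n) (\<theta> n \<circ> \<sigma> n g) (\<theta> n)) \<longlonglongrightarrow> 1))"

definition cocycle ::
  "('g, 'm) monoid_scheme \<Rightarrow> ('g set \<Rightarrow> 'g) \<Rightarrow> 'g \<Rightarrow> 'g set \<Rightarrow> 'g" where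
  "cocycle G s g C = inv\<^bsub>G\<^esub> (s (g <#\<^bsub>G\<^esub> C)) \<otimes>\<^bsub>G\<^esub> g \<otimes>\<^bsub>G\<^esub> s C"

definition induced ::
  "('g, 'm) monoid_scheme \<Rightarrow> 'g set \<Rightarrow> ('g set \<Rightarrow> 'g) \<Rightarrow> (nat \<Rightarrow> 'x set) \<Rightarrow>
   (nat \<Rightarrow> 'g \<Rightarrow> 'x \<Rightarrow> 'x) \<Rightarrow> nat \<Rightarrow> 'g \<Rightarrow> ('g set \<times> 'x) \<Rightarrow> ('g set \<times> 'x)" where
  "induced G H s X \<sigma> n g p =
     (if p \<in> (lcosets\<^bsub>G\<^esub> H) \<times> X n
      then (g <#\<^bsub>G\<^esub> fst p, \<sigma> n (cocycle G s g (fst p)) (snd p))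
      else p)"

end

theory Submission
  imports Defs
begin

lemma ham_bounds: "0 \<le> hamming X a b" "hamming X a b \<le> 1"
  unfolding hamming_def
   apply simp
  apply (cases "finite X \<and> card X > 0")
   apply (simp add: divide_le_eq_1 card_mono)
  apply auto
  done

lemma ham_agree:
  assumes "finite X" "X \<noteq> {}"
  shows "hamming X a b = 1 - real (card {x\<in>X. a x = b x}) / real (card X)"
proof -
  have "card {x\<in>X. a x \<noteq> b x} + card {x\<in>X. a x = b x} = card X"
  proof -
    have "{x\<in>X. a x \<noteq> b x} \<union> {x\<in>X. a x = b x} = X" by auto
    moreover have "{x\<in>X. a x \<noteq> b x} \<inter> {x\<in>X. a x = b x} = {}" by auto
    ultimately show ?thesis using assms(1)
      by (metis (no_types, lifting) card_Un_disjoint finite_Un)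
  qed
  then have "real (card {x\<in>X. a x \<noteq> b x}) = real (card X) - real (card {x\<in>X. a x = b x})"
    by linarith
  moreover have "card X > 0" using assms by (simp add: card_gt_0_iff)
  ultimately show ?thesis unfolding hamming_def by (simp add: field_simps)
qed

lemma slice_card:
  assumes "finite L" "finite X" "c \<in> L"
  shows "card {x\<in>X. Q (c, x)} \<le> card {p\<in>L \<times> X. Q p}"
proof -
  have "Pair c ` {x\<in>X. Q (c, x)} \<subseteq> {p\<in>L \<times> X. Q p}" using assms by auto
  moreover have "inj_on (Pair c) {x\<in>X. Q (c, x)}" by (auto simp: inj_on_def)
  ultimately show ?thesis using assms
    by (metis (no_types, lifting) card_image card_mono finite_SigmaI finite_subset mem_Collect_eq subsetI)
qed

lemma ham_slice:
  assumes "finite L" "finite X" "c \<in> L"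
  shows "hamming X (\<lambda>x. a (c, x)) (\<lambda>x. b (c, x)) \<le> real (card L) * hamming (L \<times> X) a b"
proof (cases "card X = 0")
  case True then show ?thesis using ham_bounds[of "L \<times> X" a b] assms
    by (simp add: hamming_def)
next
  case False
  have L: "card L > 0" using assms by (auto simp: card_gt_0_iff)
  have "real (card {x\<in>X. a (c, x) \<noteq> b (c, x)}) \<le> real (card {p\<in>L \<times> X. a p \<noteq> b p})"
    using slice_card[OF assms, of "\<lambda>p. a p \<noteq> b p"] by simp
  then show ?thesis using False L unfolding hamming_def
    by (simp add: card_cartesian_product field_simps)
qed

lemma ham_slice_agree:
  assumes "finite L" "finite X" "c \<in> L" "X \<noteq> {}"
  shows "1 - hamming X (\<lambda>x. a (c, x)) (\<lambda>x. b (c, x)) \<le> real (card L) * (1 - hamming (L \<times> X) a b)"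
proof -
  have L: "card L > 0" using assms by (auto simp: card_gt_0_iff)
  have X: "card X > 0" using assms by (auto simp: card_gt_0_iff)
  have LX: "finite (L \<times> X)" "L \<times> X \<noteq> {}" using assms by auto
  have "real (card {x\<in>X. a (c, x) = b (c, x)}) \<le> real (card {p\<in>L \<times> X. a p = b p})"
    using slice_card[OF assms(1-3), of "\<lambda>p. a p = b p"] by simp
  then show ?thesis using L X unfolding ham_agree[OF assms(2,4)] ham_agree[OF LX]
    by (simp add: card_cartesian_product field_simps)
qed

theorem lemma4p4:
  fixes G :: "('g, 'm) monoid_scheme"
    and H :: "'g set"
    and X :: "nat \<Rightarrow> 'x set"
    and \<sigma> :: "nat \<Rightarrow> 'g \<Rightarrow> 'x \<Rightarrow> 'x"
    and s :: "'g set \<Rightarrow> 'g"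
  assumes "group G"
    and "countable (carrier G)"
    and "subgroup H G"
    and "finite (lcosets\<^bsub>G\<^esub> H)"
    and "sofic_approx (G\<lparr>carrier := H\<rparr>) X \<sigma>"
    and "s H = \<one>\<^bsub>G\<^esub>"
    and "\<forall>C\<in>lcosets\<^bsub>G\<^esub> H. s C \<in> C"
    and "diamond G (\<lambda>n. (lcosets\<^bsub>G\<^esub> H) \<times> X n) (induced G H s X \<sigma>)"
  shows "diamond (G\<lparr>carrier := H\<rparr>) X \<sigma>"
proof -
  interpret group G by fact
  interpret sg: subgroup H G by fact
  define L where "L = lcosets\<^bsub>G\<^esub> H"
  have finL: "finite L" using assms(4) L_def by simp
  have coset: "h <#\<^bsub>G\<^esub> H = H" if "h \<in> H" for h
  proof
    show "h <#\<^bsub>G\<^esub> H \<subseteq> H" using that by (auto simp: l_coset_def)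
    show "H \<subseteq> h <#\<^bsub>G\<^esub> H"
    proof
      fix y assume y: "y \<in> H"
      have "y = h \<otimes>\<^bsub>G\<^esub> (inv\<^bsub>G\<^esub> h \<otimes>\<^bsub>G\<^esub> y)" using that y
        by (simp add: m_assoc[symmetric] r_inv)
      moreover have "inv\<^bsub>G\<^esub> h \<otimes>\<^bsub>G\<^esub> y \<in> H" using that y by simp
      ultimately show "y \<in> h <#\<^bsub>G\<^esub> H" unfolding l_coset_def by blast
    qed
  qed
  have HL: "H \<in> L" unfolding L_def using coset[of "\<one>\<^bsub>G\<^esub>"]
    by (auto simp: LCOSETS_def) 
  have fin: "finite (X n)" for n using assms(5) by (simp add: sofic_approx_def)
  have ind: "induced G H s X \<sigma> n h (H, x) = (H, \<sigma> n h x)" if "h \<in> H" "x \<in> X n" for n h x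
    using that HL coset assms(6) unfolding induced_def cocycle_def L_def by simp
  obtain Y :: "nat \<Rightarrow> nat set" and \<tau> :: "nat \<Rightarrow> 'g \<Rightarrow> nat \<Rightarrow> nat"
    and \<theta> :: "nat \<Rightarrow> 'g set \<times> 'x \<Rightarrow> nat" where Y: "sofic_approx G Y \<tau>"
    and hom: "\<forall>n. \<forall>g\<in>carrier G. \<forall>h\<in>carrier G. \<tau> n (g \<otimes>\<^bsub>G\<^esub> h) = \<tau> n g \<circ> \<tau> n h"
    and im: "\<forall>n. \<theta> n ` (L \<times> X n) \<subseteq> Y n"
    and b: "\<forall>g\<in>carrier G. (\<lambda>n. hamming (L \<times> X n) (\<theta> n \<circ> induced G H s X \<sigma> n g) (\<tau> n g \<circ> \<theta> n)) \<longlonglongrightarrow> 0"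
    and c: "\<forall>g\<in>carrier G. g \<noteq> \<one>\<^bsub>G\<^esub> \<longrightarrow> (\<lambda>n. hamming (L \<times> X n) (\<theta> n \<circ> induced G H s X \<sigma> n g) (\<theta> n)) \<longlonglongrightarrow> 1"
    using assms(8) unfolding diamond_def L_def by blast
  define \<theta>' where "\<theta>' n x = \<theta> n (H, x)" for n x
  show ?thesis
    unfolding diamond_def
    apply (rule exI[of _ Y], rule exI[of _ \<tau>], rule exI[of _ \<theta>'])
  proof (intro conjI)
    show "sofic_approx (G\<lparr>carrier := H\<rparr>) Y \<tau>"
      using Y sg.subset unfolding sofic_approx_def by auto
    show "\<forall>n. \<forall>g\<in>carrier (G\<lparr>carrier := H\<rparr>). \<forall>h\<in>carrier (G\<lparr>carrier := H\<rparr>).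
        \<tau> n (g \<otimes>\<^bsub>G\<lparr>carrier := H\<rparr>\<^esub> h) = \<tau> n g \<circ> \<tau> n h"
      using hom sg.subset by auto
    show "\<forall>n. \<theta>' n ` X n \<subseteq> Y n" using im HL unfolding \<theta>'_def by auto
    show "\<forall>g\<in>carrier (G\<lparr>carrier := H\<rparr>). (\<lambda>n. hamming (X n) (\<theta>' n \<circ> \<sigma> n g) (\<tau> n g \<circ> \<theta>' n)) \<longlonglongrightarrow> 0"
    proof
      fix g assume "g \<in> carrier (G\<lparr>carrier := H\<rparr>)"
      then have g: "g \<in> H" by simp
      have eq: "hamming (X n) (\<theta>' n \<circ> \<sigma> n g) (\<tau> n g \<circ> \<theta>' n)
          = hamming (X n) (\<lambda>x. (\<theta> n \<circ> induced G H s X \<sigma> n g) (H, x)) (\<lambda>x. (\<tau> n g \<circ> \<theta> n) (H, x))" for n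
        unfolding hamming_def \<theta>'_def using ind[OF g] by (intro arg_cong2[where f="(/)"] arg_cong[where f=card] arg_cong[where f=real]) auto
      have le: "hamming (X n) (\<theta>' n \<circ> \<sigma> n g) (\<tau> n g \<circ> \<theta>' n)
          \<le> real (card L) * hamming (L \<times> X n) (\<theta> n \<circ> induced G H s X \<sigma> n g) (\<tau> n g \<circ> \<theta> n)" for n
        unfolding eq by (rule ham_slice[OF finL fin HL])
      have "(\<lambda>n. real (card L) * hamming (L \<times> X n) (\<theta> n \<circ> induced G H s X \<sigma> n g) (\<tau> n g \<circ> \<theta> n)) \<longlonglongrightarrow> real (card L) * 0"
        using b g sg.subset by (intro tendsto_mult tendsto_const) auto
      then have lim: "(\<lambda>n. real (card L) * hamming (L \<times> X n) (\<theta> n \<circ> induced G H s X \<sigma> n g) (\<tau> n g \<circ> \<theta> n)) \<longlonglongrightarrow> 0"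
        by simp
      have e1: "eventually (\<lambda>n. 0 \<le> hamming (X n) (\<theta>' n \<circ> \<sigma> n g) (\<tau> n g \<circ> \<theta>' n)) sequentially"
        by (simp add: ham_bounds)
      have e2: "eventually (\<lambda>n. hamming (X n) (\<theta>' n \<circ> \<sigma> n g) (\<tau> n g \<circ> \<theta>' n)
          \<le> real (card L) * hamming (L \<times> X n) (\<theta> n \<circ> induced G H s X \<sigma> n g) (\<tau> n g \<circ> \<theta> n)) sequentially"
        by (rule always_eventually) (rule allI, rule le)
      show "(\<lambda>n. hamming (X n) (\<theta>' n \<circ> \<sigma> n g) (\<tau> n g \<circ> \<theta>' n)) \<longlonglongrightarrow> 0"
        by (rule real_tendsto_sandwich[OF e1 e2 tendsto_const lim])
    qed
    show "\<forall>g\<in>carrier (G\<lparr>carrier := H\<rparr>). g \<noteq> \<one>\<^bsub>G\<lparr>carrier := H\<rparr>\<^esub> \<longrightarrow>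
        (\<lambda>n. hamming (X n) (\<theta>' n \<circ> \<sigma> n g) (\<theta>' n)) \<longlonglongrightarrow> 1"
    proof (intro ballI impI)
      fix g assume "g \<in> carrier (G\<lparr>carrier := H\<rparr>)" "g \<noteq> \<one>\<^bsub>G\<lparr>carrier := H\<rparr>\<^esub>"
      then have g: "g \<in> H" "g \<noteq> \<one>\<^bsub>G\<^esub>" by auto
      let ?h = "\<lambda>n. hamming (L \<times> X n) (\<theta> n \<circ> induced G H s X \<sigma> n g) (\<theta> n)"
      have hl: "?h \<longlonglongrightarrow> 1" using c g sg.subset by auto
      then have "eventually (\<lambda>n. ?h n > 1/2) sequentially"
        by (rule order_tendstoD) simp
      then have ev: "eventually (\<lambda>n. X n \<noteq> {}) sequentially"
        by eventually_elim (auto simp: hamming_def)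
      have eq: "hamming (X n) (\<theta>' n \<circ> \<sigma> n g) (\<theta>' n)
          = hamming (X n) (\<lambda>x. (\<theta> n \<circ> induced G H s X \<sigma> n g) (H, x)) (\<lambda>x. \<theta> n (H, x))" for n
        unfolding hamming_def \<theta>'_def using ind[OF g(1)] by (intro arg_cong2[where f="(/)"] arg_cong[where f=card] arg_cong[where f=real]) auto
      have le: "eventually (\<lambda>n. 1 - real (card L) * (1 - ?h n) \<le> hamming (X n) (\<theta>' n \<circ> \<sigma> n g) (\<theta>' n)) sequentially"
        using ev
      proof eventually_elim
        case (elim n)
        show ?case unfolding eq using ham_slice_agree[OF finL fin HL elim, of "\<theta> n \<circ> induced G H s X \<sigma> n g" "\<theta> n"]
          by simp
      qed
      have "(\<lambda>n. 1 - real (card L) * (1 - ?h n)) \<longlonglongrightarrow> 1 - real (card L) * (1 - 1)"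
        by (intro tendsto_intros hl)
      then have lim: "(\<lambda>n. 1 - real (card L) * (1 - ?h n)) \<longlonglongrightarrow> 1" by simp
      have e2: "eventually (\<lambda>n. hamming (X n) (\<theta>' n \<circ> \<sigma> n g) (\<theta>' n) \<le> 1) sequentially"
        by (simp add: ham_bounds)
      show "(\<lambda>n. hamming (X n) (\<theta>' n \<circ> \<sigma> n g) (\<theta>' n)) \<longlonglongrightarrow> 1"
        by (rule real_tendsto_sandwich[OF le e2 lim tendsto_const])
    qed
  qed
qed

end
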